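(* Let $m\ge2$ be even, $l\ge1$, and $V$ a finite-dimensional $\mathbb{K}$-vector space with ordered basis $(e_i)_{i\in B}$. Then $\mathrm{HPf}^{(m,l)}(V)\subseteq\mathrm{HPf}^{(m,l+1)}(V)$.
   Context: For $x\in\bigwedge^mV$ write $x=\sum_Ix_Ie_I$, where $e_I=e_{i_1}\wedge\dots\wedge e_{i_m}$ for $I=\{i_1<\dots<i_m\}\subseteq B$. For $A\subseteq B$ with $|A|=mk$, the hyper-Pfaffian form is $\mathrm{hpf}^{(m,k)}_A(x)=\sum\mathrm{sgn}(I_1,\dots,I_k)x_{I_1}\cdots x_{I_k}$, summed over unordered partitions $A=I_1\sqcup\dots\sqcup I_k$ into $m$-sets, where $\mathrm{sgn}(I_1,\dots,I_k)$ is the sign of the permutation of $A$ whose one-line form lists $I_1,\dots,I_k$ successively, each in increasing order. $\mathrm{HPf}^{(m,k)}(V)=\{x\in\bigwedge^mV:\mathrm{hpf}^{(m,k)}_A(x)=0\ \forall A\subseteq B,|A|=mk\}$. *)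

theory Defs
  imports "HOL-Combinatorics.Permutations"
begin

text \<open>Vectors of the m-th exterior power of V, with respect to the basis (e_i) indexed by
  the finite linearly ordered set B, are represented by their coordinate functions
  x :: 'b set => 'k, x I being the coefficient of e_I for an m-subset I of B.\<close>

definition ext_power :: "nat \<Rightarrow> 'b set \<Rightarrow> ('b set \<Rightarrow> 'k::field) set" where
  "ext_power m B = {x. \<forall>I. \<not> (I \<subseteq> B \<and> card I = m) \<longrightarrow> x I = 0}"

text \<open>The permutation of A whose one-line form is the list w: the i-th smallest element (0-based: the element with i smaller elements)
  of A is sent to the i-th entry of w.\<close>

definition perm_of_oneline :: "'b::linorder set \<Rightarrow> 'b list \<Rightarrow> 'b \<Rightarrow> 'b" where
  "perm_of_oneline A w = (\<lambda>a. if a \<in> A then w ! card {b \<in> A. b < a} else a)"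

definition set_partitions_into :: "nat \<Rightarrow> nat \<Rightarrow> 'b set \<Rightarrow> 'b set set set" where
  "set_partitions_into m k A = {P. \<Union>P = A \<and> card P = k \<and> finite P \<and>
      (\<forall>I\<in>P. card I = m) \<and> (\<forall>I\<in>P. \<forall>J\<in>P. I \<noteq> J \<longrightarrow> I \<inter> J = {})}"

text \<open>A listing I_1,...,I_k of the blocks of a partition (ordered by their least elements;
  for even m the resulting sign does not depend on the order of the blocks).\<close>

definition blocks_list :: "'b::linorder set set \<Rightarrow> 'b set list" where
  "blocks_list P = (THE Is. set Is = P \<and> sorted_wrt (\<lambda>I J. Min I < Min J) Is)"

definition part_sign :: "'b::linorder set \<Rightarrow> 'b set list \<Rightarrow> int" where
  "part_sign A Is = sign (perm_of_oneline A (concat (map sorted_list_of_set Is)))"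

definition hpf :: "nat \<Rightarrow> nat \<Rightarrow> 'b::linorder set \<Rightarrow> ('b set \<Rightarrow> 'k::field) \<Rightarrow> 'k" where
  "hpf m k A x = (\<Sum>P\<in>set_partitions_into m k A.
       of_int (part_sign A (blocks_list P)) * (\<Prod>I\<in>P. x I))"

definition HPf :: "nat \<Rightarrow> nat \<Rightarrow> 'b::linorder set \<Rightarrow> ('b set \<Rightarrow> 'k::field) set" where
  "HPf m k B = {x \<in> ext_power m B. \<forall>A. A \<subseteq> B \<and> card A = m * k \<longrightarrow> hpf m k A x = 0}"

end

theory Submission imports Defs begin

definition rk :: "'b::linorder set \<Rightarrow> 'b \<Rightarrow> nat" where
  "rk S a = card {b \<in> S. b < a}"

lemma rk_sl:
  assumes "finite S" "k < card S"
  shows "rk S (sorted_list_of_set S ! k) = k"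
proof -
  let ?s = "sorted_list_of_set S"
  have st: "sorted_wrt (<) ?s" by simp
  have len: "length ?s = card S" by simp
  have "{b \<in> S. b < ?s ! k} = set (take k ?s)"
  proof (rule set_eqI, rule iffI)
    fix b assume b: "b \<in> {b \<in> S. b < ?s ! k}"
    then have "b \<in> set ?s" using assms by simp
    then obtain i where i: "i < length ?s" "?s ! i = b" by (auto simp: in_set_conv_nth)
    have "i < k"
    proof (rule ccontr)
      assume "\<not> i < k"
      then have "k \<le> i" by simp
      then have "?s ! k \<le> ?s ! i" using i(1) sorted_nth_mono[of ?s k i] by simp
      then show False using b i by auto
    qed
    then show "b \<in> set (take k ?s)" using i by (auto simp: in_set_conv_nth intro!: exI[of _ i])
  next
    fix b assume "b \<in> set (take k ?s)"
    then obtain i where i: "i < k" "?s ! i = b" using assms len by (auto simp: in_set_conv_nth)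
    have "?s ! i < ?s ! k" using sorted_wrt_nth_less[OF st i(1)] assms len by simp
    moreover have "b \<in> S" using i assms len
      by (metis nth_mem order.strict_trans set_sorted_list_of_set)
    ultimately show "b \<in> {b \<in> S. b < ?s ! k}" using i by simp
  qed
  moreover have "card (set (take k ?s)) = k"
    using assms len by (simp add: distinct_card)
  ultimately show ?thesis by (simp add: rk_def)
qed

lemma rk_less:
  assumes "finite S" "a \<in> S" shows "rk S a < card S"
  unfolding rk_def using assms by (intro psubset_card_mono) auto

lemma rk_mono:
  assumes "finite S" "a \<in> S" "a' \<in> S" "a < a'" shows "rk S a < rk S a'"
  unfolding rk_def using assms by (intro psubset_card_mono) auto

lemma rk_inj: assumes "finite S" shows "inj_on (rk S) S"
proof (rule inj_onI)
  fix a a' assume "a \<in> S" "a' \<in> S" "rk S a = rk S a'"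
  then show "a = a'" using rk_mono[OF assms, of a a'] rk_mono[OF assms, of a' a]
    by (cases a a' rule: linorder_cases) auto
qed

lemma pol_alt: "perm_of_oneline A w = (\<lambda>a. if a \<in> A then w ! rk A a else a)"
  unfolding perm_of_oneline_def rk_def by (rule refl)

lemma pol_permutes:
  assumes "finite S" "distinct w" "set w = S"
  shows "perm_of_oneline S w permutes S"
proof (rule bij_imp_permutes)
  have len: "length w = card S" using assms distinct_card by metis
  let ?p = "perm_of_oneline S w"
  have inj: "inj_on ?p S"
  proof (rule inj_onI)
    fix a a' assume a: "a \<in> S" "a' \<in> S" "?p a = ?p a'"
    then have "w ! rk S a = w ! rk S a'" by (simp add: pol_alt)
    then have "rk S a = rk S a'" using assms(2) rk_less[OF assms(1)] a len
      by (simp add: nth_eq_iff_index_eq)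
    then show "a = a'" using rk_inj[OF assms(1)] a by (auto dest: inj_onD)
  qed
  have sub: "?p ` S \<subseteq> S"
    using rk_less[OF assms(1)] len assms(3) by (auto simp: pol_alt)
  show "bij_betw ?p S S"
    using inj sub endo_inj_surj[OF assms(1) sub inj] by (simp add: bij_betw_def)
  show "\<And>x. x \<notin> S \<Longrightarrow> ?p x = x" by (simp add: pol_alt)
qed

lemma pol_sign_split:
  assumes "finite A" "I \<subseteq> A" "distinct w" "set w = A - I"
  shows "sign (perm_of_oneline A (sorted_list_of_set I @ w))
       = sign (perm_of_oneline (A - I) w) *
         sign (perm_of_oneline A (sorted_list_of_set I @ sorted_list_of_set (A - I)))"
proof -
  let ?R = "A - I"
  let ?sI = "sorted_list_of_set I" and ?sR = "sorted_list_of_set ?R"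
  have fI: "finite I" using assms finite_subset by blast
  have fR: "finite ?R" using assms by simp
  have lw: "length w = card ?R" using assms distinct_card by metis
  have cA: "card A = card I + card ?R" using assms fI
    by (metis card_Diff_subset le_add_diff_inverse card_mono)
  have eq: "perm_of_oneline A (?sI @ w) = perm_of_oneline ?R w \<circ> perm_of_oneline A (?sI @ ?sR)"
  proof
    fix a
    show "perm_of_oneline A (?sI @ w) a = (perm_of_oneline ?R w \<circ> perm_of_oneline A (?sI @ ?sR)) a"
    proof (cases "a \<in> A")
      case False then show ?thesis by (auto simp: pol_alt)
    next
      case True
      define j where "j = rk A a"
      have jl: "j < card I + card ?R" using rk_less[OF assms(1) True] cA j_def by simp
      show ?thesis
      proof (cases "j < card I")
        case True
        have "?sI ! j \<in> I" using True fI by (metis nth_mem length_sorted_list_of_set set_sorted_list_of_set)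
        then show ?thesis using True \<open>a \<in> A\<close> by (simp add: pol_alt j_def[symmetric] nth_append)
      next
        case False
        let ?k = "j - card I"
        have k: "?k < card ?R" using jl False by simp
        have r: "?sR ! ?k \<in> ?R" using k fR by (metis nth_mem length_sorted_list_of_set set_sorted_list_of_set)
        have "rk ?R (?sR ! ?k) = ?k" using rk_sl[OF fR k] .
        then show ?thesis using False \<open>a \<in> A\<close> r lw
          by (simp add: pol_alt j_def[symmetric] nth_append)
      qed
    qed
  qed
  have p1: "permutation (perm_of_oneline ?R w)"
    using pol_permutes[OF fR assms(3,4)] fR permutes_imp_permutation by blast
  have "distinct (?sI @ ?sR)" "set (?sI @ ?sR) = A" using fI fR assms(2) by auto
  then have p2: "permutation (perm_of_oneline A (?sI @ ?sR))"
    using pol_permutes[OF assms(1)] assms(1) permutes_imp_permutation by blast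
  show ?thesis unfolding eq sign_compose[OF p1 p2] ..
qed

lemma Min_inj_blocks:
  assumes "\<forall>J\<in>P. finite J \<and> J \<noteq> {}" "\<forall>I\<in>P. \<forall>J\<in>P. I \<noteq> J \<longrightarrow> I \<inter> J = {}"
  shows "inj_on Min P"
proof (rule inj_onI)
  fix I J assume "I \<in> P" "J \<in> P" "Min I = Min J"
  then have "Min I \<in> I \<inter> J" using assms(1) by (metis IntI Min_in)
  then show "I = J" using assms(2) \<open>I \<in> P\<close> \<open>J \<in> P\<close> by blast
qed

lemma bl_unique_aux:
  assumes "inj_on Min P" "set xs = P" "sorted_wrt (\<lambda>I J. Min I < Min J) xs"
          "set ys = P" "sorted_wrt (\<lambda>I J. Min I < Min J) ys"
  shows "xs = ys"
proof -
  have "sorted_wrt (<) (map Min xs)" "sorted_wrt (<) (map Min ys)"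
    using assms by (simp_all add: sorted_wrt_map)
  moreover have "set (map Min ys) = set (map Min xs)" using assms by simp
  ultimately have "map Min ys = map Min xs" using strict_sorted_equal by blast
  then show ?thesis using assms inj_on_map_eq_map[of Min xs ys] by simp
qed

lemma bl_props:
  assumes "finite P" "\<forall>J\<in>P. finite J \<and> J \<noteq> {}" "\<forall>I\<in>P. \<forall>J\<in>P. I \<noteq> J \<longrightarrow> I \<inter> J = {}"
  shows "set (blocks_list P) = P \<and> sorted_wrt (\<lambda>I J. Min I < Min J) (blocks_list P)"
proof -
  have inj: "inj_on Min P" using Min_inj_blocks[OF assms(2,3)] .
  obtain xs where xs: "set xs = P" "distinct xs" using finite_distinct_list[OF assms(1)] by blast
  let ?ys = "sort_key Min xs"
  have "set ?ys = P" using xs by simp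
  moreover have "distinct (map Min ?ys)"
    using xs inj by (simp add: distinct_map)
  moreover have "sorted (map Min ?ys)" by simp
  ultimately have "set ?ys = P \<and> sorted_wrt (<) (map Min ?ys)"
    by (simp add: strict_sorted_iff)
  then have ex: "set ?ys = P \<and> sorted_wrt (\<lambda>I J. Min I < Min J) ?ys"
    by (simp add: sorted_wrt_map)
  have "\<exists>!Is. set Is = P \<and> sorted_wrt (\<lambda>I J. Min I < Min J) Is"
    using ex bl_unique_aux[OF inj] by blast
  then show ?thesis unfolding blocks_list_def by (rule theI')
qed

lemma bl_unique:
  assumes "finite P" "\<forall>J\<in>P. finite J \<and> J \<noteq> {}" "\<forall>I\<in>P. \<forall>J\<in>P. I \<noteq> J \<longrightarrow> I \<inter> J = {}"
     "set xs = P" "sorted_wrt (\<lambda>I J. Min I < Min J) xs"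
  shows "blocks_list P = xs"
  using bl_props[OF assms(1-3)] bl_unique_aux[OF Min_inj_blocks[OF assms(2,3)]] assms(4,5) by blast

lemma parts_insert:
  assumes "I \<subseteq> A" "card I = m" "m \<ge> 1"
  shows "{P \<in> set_partitions_into m (Suc l) A. I \<in> P} = insert I ` set_partitions_into m l (A - I)"
proof (rule set_eqI, rule iffI)
  fix P assume P: "P \<in> {P \<in> set_partitions_into m (Suc l) A. I \<in> P}"
  then have PP: "\<Union>P = A" "card P = Suc l" "finite P" "\<forall>J\<in>P. card J = m"
     "\<forall>J\<in>P. \<forall>K\<in>P. J \<noteq> K \<longrightarrow> J \<inter> K = {}" "I \<in> P"
    by (auto simp: set_partitions_into_def)
  have "\<Union>(P - {I}) = A - I"
  proof
    show "\<Union>(P - {I}) \<subseteq> A - I" using PP by blast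
    show "A - I \<subseteq> \<Union>(P - {I})" using PP by blast
  qed
  then have "P - {I} \<in> set_partitions_into m l (A - I)"
    using PP by (auto simp: set_partitions_into_def)
  moreover have "P = insert I (P - {I})" using PP by blast
  ultimately show "P \<in> insert I ` set_partitions_into m l (A - I)" by blast
next
  fix P assume "P \<in> insert I ` set_partitions_into m l (A - I)"
  then obtain Q where Q: "Q \<in> set_partitions_into m l (A - I)" "P = insert I Q" by blast
  then have QQ: "\<Union>Q = A - I" "card Q = l" "finite Q" "\<forall>J\<in>Q. card J = m"
     "\<forall>J\<in>Q. \<forall>K\<in>Q. J \<noteq> K \<longrightarrow> J \<inter> K = {}"
    by (auto simp: set_partitions_into_def)
  have "I \<noteq> {}" using assms by auto
  then have "I \<notin> Q" using QQ(1) by blast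
  then have "card P = Suc l" using QQ Q by simp
  moreover have "\<Union>P = A" using Q QQ assms by blast
  moreover have "\<forall>J\<in>P. \<forall>K\<in>P. J \<noteq> K \<longrightarrow> J \<inter> K = {}" using Q QQ by blast
  moreover have "\<forall>J\<in>P. card J = m" using Q QQ assms by simp
  moreover have "finite P" "I \<in> P" using Q QQ by simp_all
  ultimately show "P \<in> {P \<in> set_partitions_into m (Suc l) A. I \<in> P}"
    unfolding set_partitions_into_def by blast
qed

lemma inner_term:
  fixes x :: "'b::linorder set \<Rightarrow> 'k::field"
  assumes fA: "finite A" and I: "I \<subseteq> A" "card I = m" "Min A \<in> I" and m: "m \<ge> 1"
    and Q: "Q \<in> set_partitions_into m l (A - I)"
  shows "of_int (part_sign A (blocks_list (insert I Q))) * (\<Prod>J\<in>insert I Q. x J)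
    = (of_int (sign (perm_of_oneline A (sorted_list_of_set I @ sorted_list_of_set (A - I)))) * x I)
      * (of_int (part_sign (A - I) (blocks_list Q)) * (\<Prod>J\<in>Q. x J))"
proof -
  have QQ: "\<Union>Q = A - I" "finite Q" "\<forall>J\<in>Q. card J = m"
     "\<forall>J\<in>Q. \<forall>K\<in>Q. J \<noteq> K \<longrightarrow> J \<inter> K = {}"
    using Q by (auto simp: set_partitions_into_def)
  have fne: "\<forall>J\<in>Q. finite J \<and> J \<noteq> {}"
  proof
    fix J assume "J \<in> Q"
    then have "card J \<noteq> 0" using QQ(3) m by simp
    then show "finite J \<and> J \<noteq> {}" by (simp add: card_eq_0_iff)
  qed
  have fI: "finite I" "I \<noteq> {}" using finite_subset[OF I(1) fA] I(3) by blast+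
  have IQ: "I \<notin> Q"
  proof
    assume "I \<in> Q"
    then have "I \<subseteq> A - I" using QQ(1) by blast
    then show False using fI(2) by blast
  qed
  obtain bl where blQ: "blocks_list Q = bl" by simp
  have bl: "set bl = Q" "sorted_wrt (\<lambda>I J. Min I < Min J) bl"
    using bl_props[OF QQ(2) fne QQ(4)] unfolding blQ by simp_all
  have MinI: "Min I = Min A"
    using Min_le[OF fI(1) I(3)] Min_antimono[OF I(1) fI(2) fA] by simp
  have "\<forall>J\<in>Q. Min A < Min J"
  proof
    fix J assume J: "J \<in> Q"
    then have "Min J \<in> J" using fne by simp
    then have "Min J \<in> A - I" using QQ(1) J by blast
    then have "Min A \<le> Min J" "Min J \<noteq> Min A" using fA I by auto
    then show "Min A < Min J" by simp
  qed
  then have srt: "sorted_wrt (\<lambda>I J. Min I < Min J) (I # bl)" using bl MinI by simp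
  have fne2: "\<forall>J\<in>insert I Q. finite J \<and> J \<noteq> {}" using fne fI by simp
  have dis2: "\<forall>J\<in>insert I Q. \<forall>K\<in>insert I Q. J \<noteq> K \<longrightarrow> J \<inter> K = {}"
    using QQ(1,4) by blast
  have blI: "blocks_list (insert I Q) = I # bl"
    using bl_unique[OF _ fne2 dis2 _ srt] QQ(2) bl by simp
  define w where "w = concat (map sorted_list_of_set bl)"
  have "sorted_wrt (<) (map Min bl)" using bl(2) by (simp add: sorted_wrt_map)
  then have "distinct (map Min bl)" by (simp add: strict_sorted_iff)
  then have dbl: "distinct bl" by (simp add: distinct_map)
  have injs: "inj_on sorted_list_of_set (set bl)"
  proof (rule inj_onI)
    fix J K assume "J \<in> set bl" "K \<in> set bl" "sorted_list_of_set J = sorted_list_of_set K"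
    then show "J = K" using fne bl(1) by (metis set_sorted_list_of_set)
  qed
  have dw: "distinct w" unfolding w_def
  proof (rule distinct_concat)
    show "distinct (map sorted_list_of_set bl)" using dbl injs by (simp add: distinct_map)
    show "\<And>ys. ys \<in> set (map sorted_list_of_set bl) \<Longrightarrow> distinct ys" by auto
    show "\<And>ys zs. ys \<in> set (map sorted_list_of_set bl) \<Longrightarrow> zs \<in> set (map sorted_list_of_set bl) \<Longrightarrow>
            ys \<noteq> zs \<Longrightarrow> set ys \<inter> set zs = {}"
      using fne bl(1) QQ(4) by auto (metis IntI empty_iff)
  qed
  have sw: "set w = A - I" unfolding w_def using fne bl(1) QQ(1) by auto
  have ps: "part_sign A (I # bl) = sign (perm_of_oneline (A - I) w) *
         sign (perm_of_oneline A (sorted_list_of_set I @ sorted_list_of_set (A - I)))"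
    unfolding part_sign_def using pol_sign_split[OF fA I(1) dw sw] by (simp add: w_def)
  have ps2: "part_sign (A - I) bl = sign (perm_of_oneline (A - I) w)"
    unfolding part_sign_def w_def ..
  show ?thesis unfolding blI blQ ps ps2 using IQ QQ(2) by (simp add: ac_simps)
qed

lemma notin_parts:
  assumes "I \<noteq> {}" "Q \<in> set_partitions_into m l (A - I)" shows "I \<notin> Q"
proof
  assume "I \<in> Q"
  then have "I \<subseteq> A - I" using assms(2) by (auto simp: set_partitions_into_def)
  then show False using assms(1) by blast
qed

theorem lemma3p16:
  fixes B :: "'b::linorder set" and m l :: nat
  assumes "finite B" and "m \<ge> 2" and "even m" and "l \<ge> 1"
  shows "(HPf m l B :: ('b set \<Rightarrow> 'k::field) set) \<subseteq> HPf m (l + 1) B"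
proof
  fix x :: "'b set \<Rightarrow> 'k" assume xH: "x \<in> HPf m l B"
  then have xE: "x \<in> ext_power m B"
    and hz: "\<And>A. A \<subseteq> B \<Longrightarrow> card A = m * l \<Longrightarrow> hpf m l A x = 0"
    by (auto simp: HPf_def)
  have m1: "m \<ge> 1" using assms by simp
  have "\<forall>A. A \<subseteq> B \<and> card A = m * (l + 1) \<longrightarrow> hpf m (l + 1) A x = 0"
  proof (intro allI impI, elim conjE)
    fix A assume AB: "A \<subseteq> B" and cA: "card A = m * (l + 1)"
    have fA: "finite A" using finite_subset[OF AB assms(1)] .
    have "card A \<noteq> 0" using cA m1 by simp
    then have Ane: "A \<noteq> {}" by auto
    define a0 where "a0 = Min A"
    have a0A: "a0 \<in> A" using fA Ane a0_def by simp
    define Is where "Is = {I. I \<subseteq> A \<and> card I = m \<and> a0 \<in> I}"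
    define Ps where "Ps = set_partitions_into m (Suc l) A"
    define f where "f P = of_int (part_sign A (blocks_list P)) * (\<Prod>I\<in>P. x I)" for P
    have fIs: "finite Is"
    proof (rule finite_subset)
      show "Is \<subseteq> Pow A" by (auto simp: Is_def)
      show "finite (Pow A)" using fA by simp
    qed
    have fPs: "finite Ps"
    proof (rule finite_subset)
      show "Ps \<subseteq> Pow (Pow A)" by (auto simp: Ps_def set_partitions_into_def)
      show "finite (Pow (Pow A))" using fA by simp
    qed
    have 1: "f P = (\<Sum>I\<in>{I\<in>Is. I\<in>P}. f P)" if P: "P \<in> Ps" for P
    proof -
      have PP: "\<Union>P = A" "\<forall>J\<in>P. card J = m" "\<forall>J\<in>P. \<forall>K\<in>P. J \<noteq> K \<longrightarrow> J \<inter> K = {}"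
        using P by (auto simp: Ps_def set_partitions_into_def)
      obtain J where J: "J \<in> P" "a0 \<in> J" using a0A PP(1) by blast
      have "J \<in> Is" using J PP by (auto simp: Is_def)
      have "{I\<in>Is. I\<in>P} = {J}"
      proof (rule set_eqI, rule iffI)
        fix I assume "I \<in> {I\<in>Is. I\<in>P}"
        then have "I \<in> P" "a0 \<in> I" by (auto simp: Is_def)
        then have "I = J" using J PP(3) by blast
        then show "I \<in> {J}" by simp
      qed (use \<open>J \<in> Is\<close> J in simp)
      then show ?thesis by simp
    qed
    have "hpf m (l + 1) A x = (\<Sum>P\<in>Ps. f P)"
      unfolding hpf_def Ps_def f_def by simp
    also have "\<dots> = (\<Sum>P\<in>Ps. \<Sum>I\<in>{I\<in>Is. I\<in>P}. f P)"
      by (rule sum.cong[OF refl 1])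
    also have "\<dots> = (\<Sum>I\<in>Is. \<Sum>P\<in>{P\<in>Ps. I\<in>P}. f P)"
      by (rule sum.swap_restrict[OF fPs fIs])
    also have "\<dots> = 0"
    proof (rule sum.neutral, rule ballI)
      fix I assume "I \<in> Is"
      then have I: "I \<subseteq> A" "card I = m" "Min A \<in> I" by (auto simp: Is_def a0_def)
      have Ine: "I \<noteq> {}" using I by auto
      let ?Q = "set_partitions_into m l (A - I)"
      have eq: "{P\<in>Ps. I\<in>P} = insert I ` ?Q"
        unfolding Ps_def using parts_insert[OF I(1,2) m1] .
      have inj: "inj_on (insert I) ?Q"
      proof (rule inj_onI)
        fix Q1 Q2 assume "Q1 \<in> ?Q" "Q2 \<in> ?Q" "insert I Q1 = insert I Q2"
        then show "Q1 = Q2" using notin_parts[OF Ine] by (metis insert_ident)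
      qed
      define c where "c = (of_int (sign (perm_of_oneline A (sorted_list_of_set I @ sorted_list_of_set (A - I)))) :: 'k) * x I"
      have "(\<Sum>P\<in>{P\<in>Ps. I\<in>P}. f P) = (\<Sum>Q\<in>?Q. f (insert I Q))"
        unfolding eq by (rule sum.reindex[OF inj, unfolded comp_def])
      also have "\<dots> = (\<Sum>Q\<in>?Q. c * (of_int (part_sign (A - I) (blocks_list Q)) * (\<Prod>J\<in>Q. x J)))"
        unfolding f_def c_def by (rule sum.cong[OF refl], rule inner_term[OF fA I m1])
      also have "\<dots> = c * hpf m l (A - I) x"
        by (simp add: hpf_def sum_distrib_left)
      also have "hpf m l (A - I) x = 0"
      proof (rule hz)
        show "A - I \<subseteq> B" using AB by blast
        have "finite I" using I(1) fA finite_subset by blast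
        then show "card (A - I) = m * l" using cA I by (simp add: card_Diff_subset)
      qed
      finally show "(\<Sum>P\<in>{P\<in>Ps. I\<in>P}. f P) = 0" by simp
    qed
    finally show "hpf m (l + 1) A x = 0" .
  qed
  then show "x \<in> HPf m (l + 1) B" using xE by (simp add: HPf_def)
qed

end
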